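(* Let $X,Y$ be proper metric spaces, $p\in[1,\infty)$, $f:X\to Y$ a continuous coarse map, $E^p_X$ an $L^p$-$X$-module and $E^p_Y$ an $L^p$-$Y$-module. Then for every $\varepsilon>0$ there exist an isometric operator $V_f:E^p_X\to E^p_Y$ and a contractive operator $V_f^+:E^p_Y\to E^p_X$ with $V_f^+V_f=I$ such that $\mathrm{supp}(V_f)\subseteq\{(x,y)\in X\times Y:d(f(x),y)\le\varepsilon\}$ and $\mathrm{supp}(V_f^+)\subseteq\{(y,x)\in Y\times X:d(f(x),y)\le\varepsilon\}$.
   Context: An $L^p$-$X$-module is $E^p_X=\ell^p(Z_X)\otimes\ell^p=\ell^p(Z_X,\ell^p(\mathbb N))$ with $Z_X\subseteq X$ a countable dense subset and $C_0(X)$ (and bounded Borel functions) acting by pointwise multiplication on the $Z_X$ coordinate; $\chi_U$ denotes multiplication by the indicator of $U$. For a bounded $T:E^p_X\to E^p_Y$, $\mathrm{supp}(T)$ is the set of $(x,y)\in X\times Y$ such that $\chi_VT\chi_U\neq0$ for all open neighbourhoods $U$ of $x$ and $V$ of $y$ (and analogously for operators $E^p_Y\to E^p_X$, giving subsets of $Y\times X$). A Borel map $f$ is coarse if preimages of bounded sets are bounded and for each $R>0$ there is $R'$ with $d(f(x),f(y))\le R'$ whenever $d(x,y)\le R$. *)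

theory Defs
  imports "HOL-Analysis.Analysis"
begin

definition proper_space :: "'a::metric_space itself \<Rightarrow> bool" where
  "proper_space _ \<longleftrightarrow> (\<forall>(x::'a) r. compact (cball x r))"

definition coarse_map :: "('a::metric_space \<Rightarrow> 'b::metric_space) \<Rightarrow> bool" where
  "coarse_map f \<longleftrightarrow> f \<in> borel_measurable borel
     \<and> (\<forall>B. bounded B \<longrightarrow> bounded (f -` B))
     \<and> (\<forall>R>0. \<exists>R'. \<forall>x y. dist x y \<le> R \<longrightarrow> dist (f x) (f y) \<le> R')"

text \<open>The L^p-X-module E^p_X = l^p(Z, l^p(N)): its elements are functions
  Z x N -> C (extended by 0 outside Z) with p-summable modulus.\<close>
definition lp_module :: "real \<Rightarrow> 'a set \<Rightarrow> ('a \<Rightarrow> nat \<Rightarrow> complex) set" where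
  "lp_module p Z = {\<xi>. (\<forall>z n. z \<notin> Z \<longrightarrow> \<xi> z n = 0)
      \<and> (\<lambda>(z,n). norm (\<xi> z n) powr p) summable_on (Z \<times> UNIV)}"

definition lp_norm :: "real \<Rightarrow> 'a set \<Rightarrow> ('a \<Rightarrow> nat \<Rightarrow> complex) \<Rightarrow> real" where
  "lp_norm p Z \<xi> = (\<Sum>\<^sub>\<infinity>(z,n)\<in>Z \<times> UNIV. norm (\<xi> z n) powr p) powr (1 / p)"

definition chi :: "'a set \<Rightarrow> ('a \<Rightarrow> nat \<Rightarrow> complex) \<Rightarrow> ('a \<Rightarrow> nat \<Rightarrow> complex)" where
  "chi U \<xi> = (\<lambda>z n. if z \<in> U then \<xi> z n else 0)"

text \<open>Bounded linear operators E^p_X -> E^p_Y (only their values on E^p_X matter).\<close>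
definition bounded_lp_op :: "real \<Rightarrow> 'a set \<Rightarrow> 'b set
    \<Rightarrow> (('a \<Rightarrow> nat \<Rightarrow> complex) \<Rightarrow> ('b \<Rightarrow> nat \<Rightarrow> complex)) \<Rightarrow> bool" where
  "bounded_lp_op p ZX ZY T \<longleftrightarrow>
     (\<forall>\<xi>\<in>lp_module p ZX. T \<xi> \<in> lp_module p ZY)
   \<and> (\<forall>\<xi>\<in>lp_module p ZX. \<forall>\<eta>\<in>lp_module p ZX. T (\<lambda>z n. \<xi> z n + \<eta> z n) = (\<lambda>z n. T \<xi> z n + T \<eta> z n))
   \<and> (\<forall>\<xi>\<in>lp_module p ZX. \<forall>c::complex. T (\<lambda>z n. c * \<xi> z n) = (\<lambda>z n. c * T \<xi> z n))
   \<and> (\<exists>C. \<forall>\<xi>\<in>lp_module p ZX. lp_norm p ZY (T \<xi>) \<le> C * lp_norm p ZX \<xi>)"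

definition isometric_lp_op :: "real \<Rightarrow> 'a set \<Rightarrow> 'b set
    \<Rightarrow> (('a \<Rightarrow> nat \<Rightarrow> complex) \<Rightarrow> ('b \<Rightarrow> nat \<Rightarrow> complex)) \<Rightarrow> bool" where
  "isometric_lp_op p ZX ZY T \<longleftrightarrow> bounded_lp_op p ZX ZY T
     \<and> (\<forall>\<xi>\<in>lp_module p ZX. lp_norm p ZY (T \<xi>) = lp_norm p ZX \<xi>)"

definition contractive_lp_op :: "real \<Rightarrow> 'a set \<Rightarrow> 'b set
    \<Rightarrow> (('a \<Rightarrow> nat \<Rightarrow> complex) \<Rightarrow> ('b \<Rightarrow> nat \<Rightarrow> complex)) \<Rightarrow> bool" where
  "contractive_lp_op p ZX ZY T \<longleftrightarrow> bounded_lp_op p ZX ZY T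
     \<and> (\<forall>\<xi>\<in>lp_module p ZX. lp_norm p ZY (T \<xi>) \<le> lp_norm p ZX \<xi>)"

definition lp_supp :: "real \<Rightarrow> 'a::topological_space set \<Rightarrow> 'b::topological_space set
    \<Rightarrow> (('a \<Rightarrow> nat \<Rightarrow> complex) \<Rightarrow> ('b \<Rightarrow> nat \<Rightarrow> complex)) \<Rightarrow> ('a \<times> 'b) set" where
  "lp_supp p ZX ZY T = {(x,y). \<forall>U V. open U \<longrightarrow> x \<in> U \<longrightarrow> open V \<longrightarrow> y \<in> V \<longrightarrow>
      (\<exists>\<xi>\<in>lp_module p ZX. chi V (T (chi U \<xi>)) \<noteq> (\<lambda>z n. 0))}"

end

theory Submission
  imports Defs
begin

definition reV :: "('a \<times> nat \<Rightarrow> 'b \<times> nat) \<Rightarrow> 'a set \<Rightarrow> ('a \<Rightarrow> nat \<Rightarrow> complex) \<Rightarrow> 'b \<Rightarrow> nat \<Rightarrow> complex" where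
  "reV g ZX \<xi> = (\<lambda>y m. if (y,m) \<in> g ` (ZX \<times> UNIV) then case_prod \<xi> (inv_into (ZX \<times> UNIV) g (y,m)) else 0)"

definition reVp :: "('a \<times> nat \<Rightarrow> 'b \<times> nat) \<Rightarrow> 'a set \<Rightarrow> ('b \<Rightarrow> nat \<Rightarrow> complex) \<Rightarrow> 'a \<Rightarrow> nat \<Rightarrow> complex" where
  "reVp g ZX \<eta> = (\<lambda>z n. if z \<in> ZX then case_prod \<eta> (g (z,n)) else 0)"

lemma reV_iso:
  assumes inj: "inj_on g (ZX \<times> UNIV)" and sub: "g ` (ZX \<times> UNIV) \<subseteq> ZY \<times> UNIV"
    and xi: "\<xi> \<in> lp_module p ZX" and p: "p > 0"
  shows "reV g ZX \<xi> \<in> lp_module p ZY \<and> lp_norm p ZY (reV g ZX \<xi>) = lp_norm p ZX \<xi>"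
proof -
  let ?S = "ZX \<times> (UNIV::nat set)"
  let ?F = "\<lambda>(z,n). norm (\<xi> z n) powr p"
  let ?H = "\<lambda>(y,m). norm (reV g ZX \<xi> y m) powr p"
  have sF: "?F summable_on ?S" using xi unfolding lp_module_def by auto
  then have hF: "(?F has_sum infsum ?F ?S) ?S" by simp
  have eq: "(?H \<circ> g) q = ?F q" if "q \<in> ?S" for q
  proof -
    obtain y m where gq: "g q = (y,m)" by fastforce
    have "inv_into ?S g (g q) = q" using inj that by (simp add: inv_into_f_f)
    then show ?thesis using that gq unfolding reV_def by (auto simp: image_iff) metis
  qed
  have "((?H \<circ> g) has_sum infsum ?F ?S) ?S"
    using hF by (rule has_sum_cong[THEN iffD2, rotated]) (use eq in auto)
  then have "(?H has_sum infsum ?F ?S) (g ` ?S)" using has_sum_reindex[OF inj] by blast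
  then have hH: "(?H has_sum infsum ?F ?S) (ZY \<times> UNIV)"
  proof (rule has_sum_cong_neutral[THEN iffD1, rotated -1])
    fix q assume "q \<in> ZY \<times> UNIV - g ` ?S"
    then show "?H q = 0" using p unfolding reV_def by (cases q) auto
  qed (use sub in auto)
  have zero: "reV g ZX \<xi> y m = 0" if "y \<notin> ZY" for y m
    using that sub unfolding reV_def by auto
  show ?thesis
    using hH zero unfolding lp_module_def lp_norm_def
    by (auto simp: summable_on_def infsumI)
qed

lemma reVp_contr:
  assumes inj: "inj_on g (ZX \<times> UNIV)" and sub: "g ` (ZX \<times> UNIV) \<subseteq> ZY \<times> UNIV"
    and eta: "\<eta> \<in> lp_module p ZY" and p: "p > 0"
  shows "reVp g ZX \<eta> \<in> lp_module p ZX \<and> lp_norm p ZX (reVp g ZX \<eta>) \<le> lp_norm p ZY \<eta>"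
proof -
  let ?S = "ZX \<times> (UNIV::nat set)"
  let ?H = "\<lambda>(y,m). norm (\<eta> y m) powr p"
  let ?F = "\<lambda>(z,n). norm (reVp g ZX \<eta> z n) powr p"
  have sH: "?H summable_on (ZY \<times> UNIV)" using eta unfolding lp_module_def by auto
  have sH2: "?H summable_on (g ` ?S)" by (rule summable_on_subset_banach[OF sH sub])
  then have "(?H has_sum infsum ?H (g ` ?S)) (g ` ?S)" by simp
  then have "((?H \<circ> g) has_sum infsum ?H (g ` ?S)) ?S" using has_sum_reindex[OF inj] by blast
  then have hF: "(?F has_sum infsum ?H (g ` ?S)) ?S"
    by (rule has_sum_cong[THEN iffD2, rotated]) (auto simp: reVp_def split: prod.splits)
  have le: "infsum ?H (g ` ?S) \<le> infsum ?H (ZY \<times> UNIV)"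
    by (rule infsum_mono_neutral[OF sH2 sH]) (use sub in auto)
  have nn: "0 \<le> infsum ?H (g ` ?S)" by (rule infsum_nonneg) auto
  have "infsum ?F ?S = infsum ?H (g ` ?S)" using hF infsumI by blast
  then have "lp_norm p ZX (reVp g ZX \<eta>) \<le> lp_norm p ZY \<eta>"
    unfolding lp_norm_def using le nn p by (auto intro!: powr_mono2)
  moreover have "reVp g ZX \<eta> \<in> lp_module p ZX"
    using hF unfolding lp_module_def by (auto simp: summable_on_def reVp_def)
  ultimately show ?thesis by blast
qed

lemma reVp_reV:
  assumes inj: "inj_on g (ZX \<times> UNIV)" and xi: "\<xi> \<in> lp_module p ZX"
  shows "reVp g ZX (reV g ZX \<xi>) = \<xi>"
proof (intro ext)
  fix z n
  show "reVp g ZX (reV g ZX \<xi>) z n = \<xi> z n"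
  proof (cases "z \<in> ZX")
    case True
    then have "(z,n) \<in> ZX \<times> UNIV" by auto
    then have "inv_into (ZX \<times> UNIV) g (g (z,n)) = (z,n)" using inj by (simp add: inv_into_f_f)
    then show ?thesis using True unfolding reVp_def reV_def
      by (auto split: prod.splits simp: image_iff)
  next
    case False
    then show ?thesis using xi unfolding reVp_def lp_module_def by auto
  qed
qed


lemma geom:
  fixes f :: "'a::metric_space \<Rightarrow> 'b::metric_space"
  assumes "dist (f z) (f x) < d" "dist (f z) wz < e" "dist wz y < d"
  shows "dist (f x) y < e + 2 * d"
proof -
  have "dist (f x) y \<le> dist (f x) (f z) + dist (f z) wz + dist wz y"
    by (metis add_mono dist_triangle order_refl order_trans)
  then show ?thesis using assms by (simp add: dist_commute)
qed

theorem mainTheorem8: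
  fixes f :: "'a::metric_space \<Rightarrow> 'b::metric_space"
    and ZX :: "'a set" and ZY :: "'b set" and p :: real and \<epsilon> :: real
  assumes "proper_space TYPE('a)" and "proper_space TYPE('b)"
    and "1 \<le> p"
    and "continuous_on UNIV f" and "coarse_map f"
    and "countable ZX" and "closure ZX = UNIV"
    and "countable ZY" and "closure ZY = UNIV"
    and "\<epsilon> > 0"
  shows "\<exists>V Vp. isometric_lp_op p ZX ZY V \<and> contractive_lp_op p ZY ZX Vp
     \<and> (\<forall>\<xi>\<in>lp_module p ZX. Vp (V \<xi>) = \<xi>)
     \<and> lp_supp p ZX ZY V \<subseteq> {(x,y). dist (f x) y \<le> \<epsilon>}
     \<and> lp_supp p ZY ZX Vp \<subseteq> {(y,x). dist (f x) y \<le> \<epsilon>}"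
proof -
  have p: "p > 0" using assms(3) by simp
  have "\<forall>z. \<exists>y. y \<in> ZY \<and> dist (f z) y < \<epsilon>"
    using closure_approachableD[of _ ZY \<epsilon>] assms(9,10) by blast
  then obtain w where w: "\<And>z. w z \<in> ZY \<and> dist (f z) (w z) < \<epsilon>" by metis
  define g where "g = (\<lambda>(z::'a,n::nat). (w z, prod_encode (to_nat_on ZX z, n)))"
  have inj: "inj_on g (ZX \<times> UNIV)"
    unfolding g_def inj_on_def using assms(6) by (auto simp: prod_encode_eq)
  have sub: "g ` (ZX \<times> UNIV) \<subseteq> ZY \<times> UNIV" unfolding g_def using w by auto
  have cont: "\<And>x e. e > 0 \<Longrightarrow> \<exists>r>0. \<forall>z. dist z x < r \<longrightarrow> dist (f z) (f x) < e"
    using assms(4) unfolding continuous_on_iff by blast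
  have bV: "bounded_lp_op p ZX ZY (reV g ZX)"
    unfolding bounded_lp_op_def
  proof (intro conjI ballI allI)
    show "\<And>\<xi>. \<xi> \<in> lp_module p ZX \<Longrightarrow> reV g ZX \<xi> \<in> lp_module p ZY"
      using reV_iso[OF inj sub _ p] by blast
    show "\<exists>C. \<forall>\<xi>\<in>lp_module p ZX. lp_norm p ZY (reV g ZX \<xi>) \<le> C * lp_norm p ZX \<xi>"
      using reV_iso[OF inj sub _ p] by (intro exI[of _ 1]) auto
  qed (auto intro!: ext simp: reV_def split: prod.splits)
  have bVp: "bounded_lp_op p ZY ZX (reVp g ZX)"
    unfolding bounded_lp_op_def
  proof (intro conjI ballI allI)
    show "\<And>\<xi>. \<xi> \<in> lp_module p ZY \<Longrightarrow> reVp g ZX \<xi> \<in> lp_module p ZX"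
      using reVp_contr[OF inj sub _ p] by blast
    show "\<exists>C. \<forall>\<xi>\<in>lp_module p ZY. lp_norm p ZX (reVp g ZX \<xi>) \<le> C * lp_norm p ZY \<xi>"
      using reVp_contr[OF inj sub _ p] by (intro exI[of _ 1]) auto
  qed (auto intro!: ext simp: reVp_def split: prod.splits)
  have s1: "lp_supp p ZX ZY (reV g ZX) \<subseteq> {(x,y). dist (f x) y \<le> \<epsilon>}"
  proof (clarify, rule ccontr)
    fix x y assume xy: "(x, y) \<in> lp_supp p ZX ZY (reV g ZX)" and nd: "\<not> dist (f x) y \<le> \<epsilon>"
    define d where "d = (dist (f x) y - \<epsilon>) / 3"
    have d: "d > 0" using nd by (simp add: d_def)
    obtain r where r: "r > 0" "\<And>z. dist z x < r \<Longrightarrow> dist (f z) (f x) < d" using cont[OF d] by blast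
    have "\<exists>\<xi>\<in>lp_module p ZX. chi (ball y d) (reV g ZX (chi (ball x r) \<xi>)) \<noteq> (\<lambda>z n. 0)"
      using xy d r(1) unfolding lp_supp_def by auto
    then obtain \<xi> where "chi (ball y d) (reV g ZX (chi (ball x r) \<xi>)) \<noteq> (\<lambda>z n. 0)" by blast
    then obtain y' m where ne: "chi (ball y d) (reV g ZX (chi (ball x r) \<xi>)) y' m \<noteq> 0" by metis
    then have y': "y' \<in> ball y d" and im: "(y',m) \<in> g ` (ZX \<times> UNIV)"
      unfolding chi_def reV_def by (auto split: if_splits)
    obtain z n where zn: "inv_into (ZX \<times> UNIV) g (y',m) = (z,n)" by fastforce
    have "(z,n) \<in> ZX \<times> UNIV" "g (z,n) = (y',m)"
      using inv_into_into[OF im] f_inv_into_f[OF im] zn by auto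
    then have wz: "w z = y'" unfolding g_def by auto
    have "z \<in> ball x r" using ne im zn unfolding chi_def reV_def by (auto split: if_splits)
    then have "dist (f z) (f x) < d" using r(2) by (metis mem_ball dist_commute)
    moreover have "dist (w z) y < d" using y' wz by (simp add: dist_commute)
    ultimately have "dist (f x) y < \<epsilon> + 2 * d" using geom w by blast
    then show False using d by (simp add: d_def field_simps)
  qed
  have s2: "lp_supp p ZY ZX (reVp g ZX) \<subseteq> {(y,x). dist (f x) y \<le> \<epsilon>}"
  proof (clarify, rule ccontr)
    fix x y assume xy: "(y, x) \<in> lp_supp p ZY ZX (reVp g ZX)" and nd: "\<not> dist (f x) y \<le> \<epsilon>"
    define d where "d = (dist (f x) y - \<epsilon>) / 3"
    have d: "d > 0" using nd by (simp add: d_def)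
    obtain r where r: "r > 0" "\<And>z. dist z x < r \<Longrightarrow> dist (f z) (f x) < d" using cont[OF d] by blast
    have "\<exists>\<xi>\<in>lp_module p ZY. chi (ball x r) (reVp g ZX (chi (ball y d) \<xi>)) \<noteq> (\<lambda>z n. 0)"
      using xy d r(1) unfolding lp_supp_def by auto
    then obtain \<xi> where "chi (ball x r) (reVp g ZX (chi (ball y d) \<xi>)) \<noteq> (\<lambda>z n. 0)" by blast
    then obtain z n where ne: "chi (ball x r) (reVp g ZX (chi (ball y d) \<xi>)) z n \<noteq> 0" by metis
    then have zb: "z \<in> ball x r" and wz: "w z \<in> ball y d"
      unfolding chi_def reVp_def g_def by (auto split: if_splits)
    have "dist (f z) (f x) < d" using zb r(2) by (metis mem_ball dist_commute)
    moreover have "dist (w z) y < d" using wz by (simp add: dist_commute)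
    ultimately have "dist (f x) y < \<epsilon> + 2 * d" using geom w by blast
    then show False using d by (simp add: d_def field_simps)
  qed
  show ?thesis
    apply (rule exI[of _ "reV g ZX"], rule exI[of _ "reVp g ZX"])
    using bV bVp s1 s2 reV_iso[OF inj sub _ p] reVp_contr[OF inj sub _ p] reVp_reV[OF inj]
    unfolding isometric_lp_op_def contractive_lp_op_def by blast
qed

end
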